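(* Let $q$ be a prime power, $1\le h\le T$ integers, and $p(r)$, $r=0,\dots,h$, a probability distribution. The discrete memoryless channel with input alphabet $\mathcal{P}(\mathbb{F}_q^T,h)$, output alphabet $\bigcup_{r=0}^h \mathcal{P}(\mathbb{F}_q^T,r)$, and transition probabilities $$W(V\mid U) = \begin{cases} \dfrac{p(h-\dim V)}{\binom{h}{\dim V}_q}, & V\subseteq U,\\ 0, & \text{otherwise,}\end{cases}$$ (which, by Theorem 3, is the channel from $\langle\mathbf{X}\rangle$ to $\langle \mathbf{G}\mathbf{X}\rangle$ when $\mathbf{X}$ is a uniformly random ordered basis of the input subspace and $\mathbf{G}$ is an independent random $h\times h$ matrix over $\mathbb{F}_q$ with rank deficiency distribution $p$) has capacity $$C = \max_{P_{\mathbf{U}}} I(\mathbf{U};\mathbf{V}) = \sum_{r=0}^h p(r)\,\log \frac{\binom{T}{h-r}_q}{\binom{h}{h-r}_q},$$ where the maximum is over all probability distributions on $\mathcal{P}(\mathbb{F}_q^T,h)$.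
   Context: $\mathbb{F}_q$ is the finite field with $q$ elements; for a matrix $M$, $\langle M\rangle$ is its row space. $\mathcal{P}(\mathbb{F}_q^T,k)$ is the set of $k$-dimensional subspaces of $\mathbb{F}_q^T$. $\binom{n}{\ell}_q = \prod_{i=0}^{\ell-1}\frac{q^{n-i}-1}{q^{\ell-i}-1}$ is the $q$-ary Gaussian coefficient (number of $\ell$-dimensional subspaces of an $n$-dimensional space over $\mathbb{F}_q$). The rank deficiency of an $h\times h$ matrix $G$ is $h-\operatorname{rank}G$, and $p(r)$ is the probability that the random transfer matrix has rank deficiency $r$. $I(\cdot;\cdot)$ denotes mutual information, with logarithms in a fixed base. *)

theory Defs
  imports "HOL-Analysis.Analysis"
begin

definition gauss_binom :: "nat \<Rightarrow> nat \<Rightarrow> nat \<Rightarrow> real" where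
  "gauss_binom q n l = (\<Prod>i<l. (real q ^ (n - i) - 1) / (real q ^ (l - i) - 1))"

definition is_subspace :: "('a::field ^ 'n) set \<Rightarrow> bool" where
  "is_subspace U = module.subspace (*s) U"

definition sdim :: "('a::field ^ 'n) set \<Rightarrow> nat" where
  "sdim U = vector_space.dim (*s) U"

definition grass :: "nat \<Rightarrow> ('a::field ^ 'n) set set" where
  "grass k = {U. is_subspace U \<and> sdim U = k}"

definition in_alph :: "nat \<Rightarrow> ('a::field ^ 'n) set set" where
  "in_alph h = grass h"

definition out_alph :: "nat \<Rightarrow> ('a::field ^ 'n) set set" where
  "out_alph h = (\<Union>r\<in>{0..h}. grass r)"

definition chanW :: "nat \<Rightarrow> (nat \<Rightarrow> real) \<Rightarrow> ('a::{finite,field} ^ 'n) set \<Rightarrow> ('a ^ 'n) set \<Rightarrow> real" where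
  "chanW h p V U =
     (if V \<subseteq> U then p (h - sdim V) / gauss_binom CARD('a) h (sdim V) else 0)"

definition is_dist :: "'b set \<Rightarrow> ('b \<Rightarrow> real) \<Rightarrow> bool" where
  "is_dist A P = ((\<forall>x\<in>A. 0 \<le> P x) \<and> (\<Sum>x\<in>A. P x) = 1)"

definition mutual_info_dmc ::
  "real \<Rightarrow> 'b set \<Rightarrow> 'c set \<Rightarrow> ('c \<Rightarrow> 'b \<Rightarrow> real) \<Rightarrow> ('b \<Rightarrow> real) \<Rightarrow> real" where
  "mutual_info_dmc b A B W P =
     (\<Sum>u\<in>A. \<Sum>v\<in>B.
        if P u * W v u = 0 then 0
        else P u * W v u * log b (W v u / (\<Sum>u'\<in>A. P u' * W v u')))"

end

theory Submission
  imports Defs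
begin

lemma card_field_ge2: "CARD('a::{finite,field}) \<ge> 2"
proof -
  have "{0::'a, 1} \<subseteq> UNIV" by simp
  hence "card {0::'a,1} \<le> CARD('a)" by (intro card_mono) auto
  thus ?thesis by simp
qed

lemma card_span_insert:
  fixes v :: "'a::{finite,field}^'n"
  assumes "v \<notin> vec.span X"
  shows "card (vec.span (insert v X)) = CARD('a) * card (vec.span X)"
proof -
  define f where "f = (\<lambda>(k::'a, y). k *s v + y)"
  have bij: "bij_betw f ((UNIV::'a set) \<times> vec.span X) (vec.span (insert v X))"
  proof (rule bij_betwI')
    fix x y assume x: "x \<in> (UNIV::'a set) \<times> vec.span X" and y: "y \<in> (UNIV::'a set) \<times> vec.span X"
    obtain k a where xk: "x = (k, a)" by (cases x)
    obtain l c where yl: "y = (l, c)" by (cases y)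
    show "(f x = f y) = (x = y)"
    proof
      assume e: "f x = f y"
      hence e2: "(k - l) *s v = c - a" using xk yl
        by (simp add: f_def vector_sub_rdistrib algebra_simps)
      have "k = l"
      proof (rule ccontr)
        assume "k \<noteq> l"
        have "c - a \<in> vec.span X" using x y xk yl by (auto intro: vec.span_diff)
        hence "inverse (k - l) *s ((k - l) *s v) \<in> vec.span X" unfolding e2 by (rule vec.span_scale)
        moreover have "inverse (k - l) *s ((k - l) *s v) = v" using \<open>k \<noteq> l\<close> by (simp only: vector_smult_assoc) simp
        ultimately have "v \<in> vec.span X" by simp
        thus False using assms by simp
      qed
      thus "x = y" using e xk yl by (simp add: f_def)
    qed simp
  next
    fix x assume "x \<in> (UNIV::'a set) \<times> vec.span X"
    then obtain k a where "x = (k, a)" "a \<in> vec.span X" by auto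
    thus "f x \<in> vec.span (insert v X)" unfolding vec.span_insert f_def by (auto intro!: exI[of _ k])
  next
    fix y assume "y \<in> vec.span (insert v X)"
    then obtain k where "y - k *s v \<in> vec.span X" unfolding vec.span_insert by auto
    thus "\<exists>x\<in>(UNIV::'a set) \<times> vec.span X. y = f x"
      by (intro bexI[of _ "(k, y - k *s v)"]) (auto simp: f_def)
  qed
  show ?thesis
    using bij_betw_same_card[OF bij] by (simp add: card_cartesian_product)
qed

lemma card_span_indep:
  fixes B :: "('a::{finite,field}^'n) set"
  assumes "vec.independent B"
  shows "card (vec.span B) = CARD('a) ^ card B"
proof -
  have "finite B" by simp
  thus ?thesis using assms
  proof (induction B rule: finite_induct)
    case empty thus ?case by simp
  next
    case (insert b B)
    have "vec.independent B" "b \<notin> vec.span B"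
      using insert.prems insert.hyps vec.independent_insert[of b B] by auto
    thus ?case using insert card_span_insert[of b B] by simp
  qed
qed

lemma card_subspace:
  fixes S :: "('a::{finite,field}^'n) set"
  assumes "vec.subspace S"
  shows "card S = CARD('a) ^ vec.dim S"
proof -
  obtain B where B: "B \<subseteq> S" "vec.independent B" "S \<subseteq> vec.span B" "card B = vec.dim S"
    by (rule vec.basis_exists)
  have "vec.span B = S" using vec.span_subspace[OF B(1) B(3) assms] .
  thus ?thesis using card_span_indep[OF B(2)] B(4) by simp
qed

lemma dim_iff_card:
  fixes S :: "('a::{finite,field}^'n) set"
  assumes "vec.subspace S"
  shows "sdim S = r \<longleftrightarrow> card S = CARD('a) ^ r"
  using card_subspace[OF assms] card_field_ge2[where 'a='a]
  unfolding sdim_def by (simp add: power_inject_exp)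

lemma grass_card: "(grass r :: ('a::{finite,field}^'n) set set) = {U. vec.subspace U \<and> card U = CARD('a) ^ r}"
  unfolding grass_def is_subspace_def using dim_iff_card unfolding is_subspace_def by blast

fun extl :: "('a::field^'n) set \<Rightarrow> ('a^'n) set \<Rightarrow> ('a^'n) list \<Rightarrow> bool" where
  "extl V S [] = True"
| "extl V S (w # ws) = (extl V S ws \<and> w \<in> S \<and> w \<notin> vec.span (V \<union> set ws))"

lemma extl_card:
  fixes V :: "('a::{finite,field}^'n) set"
  assumes "vec.subspace V" "extl V S ws"
  shows "card (vec.span (V \<union> set ws)) = card V * CARD('a) ^ length ws"
  using assms(2)
proof (induction ws)
  case Nil thus ?case using assms(1) by (simp add: vec.span_eq_iff[THEN iffD2])
next
  case (Cons w ws)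
  have "vec.span (V \<union> set (w # ws)) = vec.span (insert w (V \<union> set ws))" by simp
  thus ?case using Cons card_span_insert[of w "V \<union> set ws"] by simp
qed

lemma extl_mono: "extl V S ws \<Longrightarrow> set ws \<subseteq> T \<Longrightarrow> extl V T ws"
  by (induction ws) auto

lemma extl_set: "extl V S ws \<Longrightarrow> set ws \<subseteq> S"
  by (induction ws) auto

definition Ext :: "('a::field^'n) set \<Rightarrow> ('a^'n) set \<Rightarrow> nat \<Rightarrow> ('a^'n) list set" where
  "Ext V S j = {ws. length ws = j \<and> extl V S ws}"

lemma finite_Ext: "finite (Ext (V::('a::{finite,field}^'n) set) S j)"
proof -
  have "Ext V S j \<subseteq> {ws. set ws \<subseteq> UNIV \<and> length ws = j}" unfolding Ext_def by auto
  thus ?thesis using finite_lists_length_eq[of "UNIV::('a^'n) set" j] finite_subset by auto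
qed

lemma card_Ext:
  fixes V S :: "('a::{finite,field}^'n) set"
  assumes "vec.subspace V" "vec.subspace S" "V \<subseteq> S"
  shows "card (Ext V S j) = (\<Prod>i<j. card S - card V * CARD('a) ^ i)"
proof (induction j)
  case 0
  have "Ext V S 0 = {[]}" unfolding Ext_def by auto
  thus ?case by simp
next
  case (Suc j)
  have eq: "Ext V S (Suc j) = (\<lambda>(ws, w). w # ws) ` (SIGMA ws:Ext V S j. S - vec.span (V \<union> set ws))"
  proof (rule set_eqI)
    fix x show "x \<in> Ext V S (Suc j) \<longleftrightarrow> x \<in> (\<lambda>(ws, w). w # ws) ` (SIGMA ws:Ext V S j. S - vec.span (V \<union> set ws))"
      unfolding Ext_def by (cases x) (auto simp: image_iff)
  qed
  have inj: "inj_on (\<lambda>(ws, w). w # ws) (SIGMA ws:Ext V S j. S - vec.span (V \<union> set ws))"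
    by (auto simp: inj_on_def)
  have sub: "\<And>ws. ws \<in> Ext V S j \<Longrightarrow> vec.span (V \<union> set ws) \<subseteq> S"
    using assms extl_set unfolding Ext_def
    by (metis (no_types, lifting) Un_subset_iff mem_Collect_eq vec.span_minimal)
  have "card (Ext V S (Suc j)) = card (SIGMA ws:Ext V S j. S - vec.span (V \<union> set ws))"
    unfolding eq by (rule card_image[OF inj])
  also have "\<dots> = (\<Sum>ws\<in>Ext V S j. card (S - vec.span (V \<union> set ws)))"
    using finite_Ext by (intro card_SigmaI) auto
  also have "\<dots> = (\<Sum>ws\<in>Ext V S j. card S - card V * CARD('a) ^ j)"
  proof (rule sum.cong[OF refl])
    fix ws assume ws: "ws \<in> Ext V S j"
    have "card (S - vec.span (V \<union> set ws)) = card S - card (vec.span (V \<union> set ws))"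
      using sub[OF ws] by (simp add: card_Diff_subset)
    also have "\<dots> = card S - card V * CARD('a) ^ j"
      using extl_card[OF assms(1)] ws unfolding Ext_def by auto
    finally show "card (S - vec.span (V \<union> set ws)) = card S - card V * CARD('a) ^ j" .
  qed
  also have "\<dots> = card (Ext V S j) * (card S - card V * CARD('a) ^ j)" by simp
  finally show ?case using Suc by simp
qed

lemma card_Ext_pos:
  fixes V U :: "('a::{finite,field}^'n) set"
  assumes "vec.subspace V" "vec.subspace U" "V \<subseteq> U" "card U = card V * CARD('a) ^ j"
  shows "card (Ext V U j) > 0"
proof -
  have cV: "card V > 0" using assms(1) vec.subspace_0 card_gt_0_iff by fastforce
  have q: "CARD('a) \<ge> 2" by (rule card_field_ge2)
  have "\<And>i. i < j \<Longrightarrow> card V * CARD('a) ^ i < card V * CARD('a) ^ j"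
    using cV q by (simp add: power_strict_increasing)
  thus ?thesis unfolding card_Ext[OF assms(1-3)] assms(4) by (simp add: prod_pos)
qed

definition Sup :: "('a::field^'n) set \<Rightarrow> ('a^'n) set \<Rightarrow> nat \<Rightarrow> ('a^'n) set set" where
  "Sup V S c = {U. vec.subspace U \<and> V \<subseteq> U \<and> U \<subseteq> S \<and> card U = c}"

lemma Ext_fiber:
  fixes V U S :: "('a::{finite,field}^'n) set"
  assumes V: "vec.subspace V" and U: "U \<in> Sup V S (card V * CARD('a) ^ j)"
  shows "{ws \<in> Ext V S j. vec.span (V \<union> set ws) = U} = Ext V U j"
proof (rule set_eqI, rule iffI)
  fix ws assume "ws \<in> {ws \<in> Ext V S j. vec.span (V \<union> set ws) = U}"
  hence ws: "length ws = j" "extl V S ws" "vec.span (V \<union> set ws) = U" unfolding Ext_def by auto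
  have "set ws \<subseteq> U" using ws(3) vec.span_superset by blast
  thus "ws \<in> Ext V U j" using extl_mono[OF ws(2)] ws(1) unfolding Ext_def by auto
next
  fix ws assume "ws \<in> Ext V U j"
  hence ws: "length ws = j" "extl V U ws" unfolding Ext_def by auto
  have U': "vec.subspace U" "V \<subseteq> U" "U \<subseteq> S" "card U = card V * CARD('a) ^ j"
    using U unfolding Sup_def by auto
  have "extl V S ws" using extl_mono[OF ws(2)] extl_set[OF ws(2)] U'(3) by blast
  moreover have sub: "vec.span (V \<union> set ws) \<subseteq> U"
    using extl_set[OF ws(2)] U' by (simp add: vec.span_minimal)
  moreover have "card (vec.span (V \<union> set ws)) = card U"
    using extl_card[OF V ws(2)] ws(1) U'(4) by simp
  ultimately have "vec.span (V \<union> set ws) = U" using card_subset_eq[OF finite] by metis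
  thus "ws \<in> {ws \<in> Ext V S j. vec.span (V \<union> set ws) = U}"
    using \<open>extl V S ws\<close> ws(1) unfolding Ext_def by auto
qed

lemma card_Sup:
  fixes V S :: "('a::{finite,field}^'n) set"
  assumes V: "vec.subspace V" and S: "vec.subspace S" and VS: "V \<subseteq> S"
  shows "card (Sup V S (card V * CARD('a) ^ j)) * (\<Prod>i<j. card V * CARD('a) ^ j - card V * CARD('a) ^ i)
       = (\<Prod>i<j. card S - card V * CARD('a) ^ i)"
proof -
  let ?c = "card V * CARD('a) ^ j"
  have un: "Ext V S j = (\<Union>U\<in>Sup V S ?c. Ext V U j)"
  proof
    show "Ext V S j \<subseteq> (\<Union>U\<in>Sup V S ?c. Ext V U j)"
    proof
      fix ws assume ws: "ws \<in> Ext V S j"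
      let ?U = "vec.span (V \<union> set ws)"
      have e: "extl V S ws" "length ws = j" using ws unfolding Ext_def by auto
      have "?U \<subseteq> S" using extl_set[OF e(1)] VS S by (simp add: vec.span_minimal)
      moreover have "V \<subseteq> ?U" using vec.span_superset by blast
      ultimately have "?U \<in> Sup V S ?c" unfolding Sup_def
        using extl_card[OF V e(1)] e(2) by auto
      moreover have "ws \<in> Ext V ?U j" using Ext_fiber[OF V calculation] ws by blast
      ultimately show "ws \<in> (\<Union>U\<in>Sup V S ?c. Ext V U j)" by blast
    qed
  next
    show "(\<Union>U\<in>Sup V S ?c. Ext V U j) \<subseteq> Ext V S j" using Ext_fiber[OF V] by blast
  qed
  have disj: "\<forall>U1\<in>Sup V S ?c. \<forall>U2\<in>Sup V S ?c. U1 \<noteq> U2 \<longrightarrow> Ext V U1 j \<inter> Ext V U2 j = {}"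
  proof (intro ballI impI)
    fix U1 U2 assume u: "U1 \<in> Sup V S ?c" "U2 \<in> Sup V S ?c" "U1 \<noteq> U2"
    show "Ext V U1 j \<inter> Ext V U2 j = {}"
      using Ext_fiber[OF V u(1)] Ext_fiber[OF V u(2)] u(3) by blast
  qed
  have "card (Ext V S j) = (\<Sum>U\<in>Sup V S ?c. card (Ext V U j))"
    unfolding un by (rule card_UN_disjoint[OF finite _ disj]) (simp add: finite_Ext)
  also have "\<dots> = (\<Sum>U\<in>Sup V S ?c. \<Prod>i<j. ?c - card V * CARD('a) ^ i)"
    by (rule sum.cong[OF refl]) (auto simp: Sup_def card_Ext[OF V])
  finally show ?thesis using card_Ext[OF V S VS] by simp
qed

definition gg :: "nat \<Rightarrow> nat \<Rightarrow> nat \<Rightarrow> nat \<Rightarrow> real" where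
  "gg q m k j = (\<Prod>i<j. real q ^ m - real q ^ (k + i))"

lemma gg_pos: assumes "q \<ge> 2" "k + j \<le> m" shows "gg q m k j > 0"
  unfolding gg_def
proof (rule prod_pos)
  fix i assume "i \<in> {..<j}"
  hence "k + i < m" using assms by auto
  hence "real q ^ (k + i) < real q ^ m" using assms by (intro power_strict_increasing) auto
  thus "0 < real q ^ m - real q ^ (k + i)" by simp
qed

lemma gg_split: "gg q m 0 (r + s) = gg q m 0 r * gg q m r s"
  unfolding gg_def by (induction s) (auto simp: algebra_simps)

lemma gauss_gg: assumes "q \<ge> 2" "l \<le> n" shows "gauss_binom q n l = gg q n 0 l / gg q l 0 l"
proof -
  have "gauss_binom q n l = (\<Prod>i<l. (real q ^ n - real q ^ i) / (real q ^ l - real q ^ i))"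
    unfolding gauss_binom_def
  proof (rule prod.cong[OF refl])
    fix i assume "i \<in> {..<l}"
    hence i: "i \<le> n" "i \<le> l" using assms by auto
    have pos: "real q ^ i > 0" using assms by simp
    have e1: "real q ^ n = real q ^ i * real q ^ (n - i)" using i by (simp flip: power_add)
    have e2: "real q ^ l = real q ^ i * real q ^ (l - i)" using i by (simp flip: power_add)
    show "(real q ^ (n - i) - 1) / (real q ^ (l - i) - 1) = (real q ^ n - real q ^ i) / (real q ^ l - real q ^ i)"
      unfolding e1 e2 using pos
      by (metis (no_types, lifting) mult.right_neutral mult_divide_mult_cancel_left_if
          order_less_irrefl right_diff_distrib')
  qed
  also have "\<dots> = gg q n 0 l / gg q l 0 l" unfolding gg_def by (simp add: prod_dividef)
  finally show ?thesis .
qed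

lemma gauss_pos: assumes "q \<ge> 2" "l \<le> n" shows "gauss_binom q n l > 0"
  using gauss_gg[OF assms] gg_pos[OF assms(1), of 0 l n] gg_pos[OF assms(1), of 0 l l] assms by simp

lemma card_Sup_real:
  fixes V S :: "('a::{finite,field}^'n) set"
  assumes V: "vec.subspace V" and S: "vec.subspace S" and VS: "V \<subseteq> S"
    and cV: "card V = CARD('a) ^ k" and cS: "card S = CARD('a) ^ m" and km: "k + j \<le> m"
  shows "real (card (Sup V S (CARD('a) ^ (k + j)))) * gg CARD('a) (k + j) k j = gg CARD('a) m k j"
proof -
  let ?q = "CARD('a)"
  have q: "?q \<ge> 2" by (rule card_field_ge2)
  have c: "card V * ?q ^ j = ?q ^ (k + j)" using cV by (simp add: power_add)
  have conv: "\<And>a. k + j \<le> a \<Longrightarrow> real (\<Prod>i<j. ?q ^ a - card V * ?q ^ i) = gg ?q a k j"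
  proof -
    fix a assume a: "k + j \<le> a"
    show "real (\<Prod>i<j. ?q ^ a - card V * ?q ^ i) = gg ?q a k j"
      unfolding gg_def of_nat_prod
    proof (rule prod.cong[OF refl])
      fix i assume "i \<in> {..<j}"
      hence "k + i \<le> a" using a by auto
      hence le: "?q ^ (k + i) \<le> ?q ^ a" using q by (intro power_increasing) auto
      show "real (?q ^ a - card V * ?q ^ i) = real ?q ^ a - real ?q ^ (k + i)"
        using le by (simp add: cV power_add of_nat_diff)
    qed
  qed
  have "card (Sup V S (card V * ?q ^ j)) * (\<Prod>i<j. card V * ?q ^ j - card V * ?q ^ i)
       = (\<Prod>i<j. card S - card V * ?q ^ i)" by (rule card_Sup[OF V S VS])
  hence "real (card (Sup V S (?q ^ (k + j))) * (\<Prod>i<j. ?q ^ (k + j) - card V * ?q ^ i))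
       = real (\<Prod>i<j. ?q ^ m - card V * ?q ^ i)" unfolding c cS by simp
  thus ?thesis unfolding of_nat_mult using conv[of "k + j"] conv[OF km] by simp
qed

lemma countA:
  fixes U :: "('a::{finite,field}^'n) set"
  assumes U: "U \<in> grass h" and r: "r \<le> h"
  shows "real (card {V \<in> grass r. V \<subseteq> U}) = gauss_binom CARD('a) h r"
proof -
  let ?q = "CARD('a)"
  have q: "?q \<ge> 2" by (rule card_field_ge2)
  have Us: "vec.subspace U" "card U = ?q ^ h" using U grass_card by auto
  have e: "{V \<in> grass r. V \<subseteq> U} = Sup {0} U (?q ^ (0 + r))"
    unfolding grass_card Sup_def using vec.subspace_0 by auto
  have "real (card {V \<in> grass r. V \<subseteq> U}) * gg ?q r 0 r = gg ?q h 0 r"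
    unfolding e using card_Sup_real[of "{0}" U 0 h r] Us r vec.subspace_0[OF Us(1)] by simp
  thus ?thesis using gauss_gg[OF q r] gg_pos[OF q, of 0 r r]
    by (simp add: field_simps) (metis mult.commute mult_left_cancel order_less_irrefl)
qed

lemma countB:
  assumes r: "r \<le> CARD('n)"
  shows "real (card (grass r :: ('a::{finite,field}^'n) set set)) = gauss_binom CARD('a) CARD('n) r"
proof -
  let ?q = "CARD('a)"
  have q: "?q \<ge> 2" by (rule card_field_ge2)
  have e: "(grass r :: ('a^'n) set set) = Sup {0} UNIV (?q ^ (0 + r))"
    unfolding grass_card Sup_def using vec.subspace_0 by auto
  have "real (card (grass r :: ('a^'n) set set)) * gg ?q r 0 r = gg ?q CARD('n) 0 r"
    unfolding e using card_Sup_real[of "{0::'a^'n}" UNIV 0 "CARD('n)" r] r by simp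
  thus ?thesis using gauss_gg[OF q r] gg_pos[OF q, of 0 r r]
    by (simp add: field_simps) (metis mult.commute mult_left_cancel order_less_irrefl)
qed

lemma countC:
  fixes V :: "('a::{finite,field}^'n) set"
  assumes V: "V \<in> grass r" and r: "r \<le> h" and h: "h \<le> CARD('n)"
  shows "real (card {U \<in> grass h. V \<subseteq> U}) * gg CARD('a) h r (h - r) = gg CARD('a) CARD('n) r (h - r)"
proof -
  let ?q = "CARD('a)"
  have Vs: "vec.subspace V" "card V = ?q ^ r" using V grass_card by auto
  have e: "{U \<in> grass h. V \<subseteq> U} = Sup V UNIV (?q ^ (r + (h - r)))"
    unfolding grass_card Sup_def using r by auto
  show ?thesis
    unfolding e using card_Sup_real[of V UNIV r "CARD('n)" "h - r"] Vs r h by simp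
qed

lemma gauss_ident:
  assumes q: "q \<ge> 2" and r: "r \<le> h" and h: "h \<le> T"
  shows "gauss_binom q T h * gauss_binom q h r = (gg q T r (h - r) / gg q h r (h - r)) * gauss_binom q T r"
proof -
  have hh: "h = r + (h - r)" using r by simp
  have s1: "gg q T 0 h = gg q T 0 r * gg q T r (h - r)" using gg_split[of q T r "h - r"] r by simp
  have s2: "gg q h 0 h = gg q h 0 r * gg q h r (h - r)" using gg_split[of q h r "h - r"] r by simp
  have p1: "gg q h 0 r > 0" "gg q h r (h - r) > 0" "gg q r 0 r > 0"
    using gg_pos[OF q] r by auto
  show ?thesis
    unfolding gauss_gg[OF q h] gauss_gg[OF q r] gauss_gg[OF q order.trans[OF r h]] s1 s2
    using p1 by (simp add: field_simps)
qed

lemma out_sum: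
  fixes g :: "('a::{finite,field}^'n) set \<Rightarrow> real"
  shows "(\<Sum>V\<in>out_alph h. g V) = (\<Sum>r\<le>h. \<Sum>V\<in>grass r. g V)"
proof -
  have "(\<Sum>V\<in>out_alph h. g V) = (\<Sum>r\<in>{0..h}. \<Sum>V\<in>(grass r :: ('a^'n) set set). g V)"
    unfolding out_alph_def
    by (rule sum.UNION_disjoint) (auto simp: grass_def)
  thus ?thesis by (simp add: atLeast0AtMost)
qed

lemma grass_sdim: "V \<in> grass r \<Longrightarrow> sdim V = r"
  by (simp add: grass_def)

lemma out_alph_mem: "V \<in> out_alph h \<Longrightarrow> sdim V \<le> h \<and> V \<in> grass (sdim V)"
  by (auto simp: out_alph_def grass_def)

lemma chan_sum_U:
  fixes U :: "('a::{finite,field}^'n) set" and f :: "nat \<Rightarrow> real"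
  assumes U: "U \<in> grass h"
  shows "(\<Sum>V\<in>out_alph h. if V \<subseteq> U then f (sdim V) else 0) = (\<Sum>r\<le>h. gauss_binom CARD('a) h r * f r)"
  unfolding out_sum
proof (rule sum.cong[OF refl])
  fix r assume r: "r \<in> {..h}"
  have "(\<Sum>V\<in>(grass r :: ('a^'n) set set). if V \<subseteq> U then f (sdim V) else 0)
      = (\<Sum>V\<in>{V \<in> grass r. V \<subseteq> U}. f (sdim V))"
    by (rule sum.inter_filter[symmetric]) simp
  also have "\<dots> = (\<Sum>V\<in>{V \<in> grass r. V \<subseteq> U}. f r)"
    by (rule sum.cong) (auto simp: grass_sdim)
  also have "\<dots> = gauss_binom CARD('a) h r * f r"
    using countA[OF U, of r] r by simp
  finally show "(\<Sum>V\<in>(grass r :: ('a^'n) set set). if V \<subseteq> U then f (sdim V) else 0) = gauss_binom CARD('a) h r * f r" .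
qed

lemma out_sum_R:
  fixes f :: "nat \<Rightarrow> real"
  shows "(\<Sum>V\<in>(out_alph h :: ('a::{finite,field}^'n) set set). f (sdim V))
       = (\<Sum>r\<le>h. real (card (grass r :: ('a^'n) set set)) * f r)"
  unfolding out_sum
proof (rule sum.cong[OF refl])
  fix r
  have "(\<Sum>V\<in>(grass r :: ('a^'n) set set). f (sdim V)) = (\<Sum>V\<in>(grass r :: ('a^'n) set set). f r)"
    by (rule sum.cong) (auto simp: grass_sdim)
  thus "(\<Sum>V\<in>(grass r :: ('a^'n) set set). f (sdim V)) = real (card (grass r :: ('a^'n) set set)) * f r"
    by simp
qed

lemma sum_rev_atMost: "(\<Sum>r\<le>(h::nat). f (h - r)) = (\<Sum>r\<le>h. (f r :: real))"
proof -
  have "(\<Sum>r\<in>{0..h}. f r) = (\<Sum>r\<in>{0..h}. f (h + 0 - r))" by (rule sum.atLeastAtMost_rev)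
  thus ?thesis by (simp add: atLeast0AtMost)
qed

theorem theorem4:
  fixes h :: nat and p :: "nat \<Rightarrow> real" and b :: real
    and Xty :: "('a::{finite,field} ^ 'n) itself"
  assumes "1 \<le> h" and "h \<le> CARD('n)"
    and "b > 1"
    and "\<forall>r\<le>h. 0 \<le> p r" and "(\<Sum>r\<le>h. p r) = 1"
  defines "MI \<equiv> mutual_info_dmc b (in_alph h :: ('a ^ 'n) set set) (out_alph h) (chanW h p)"
    and "C \<equiv> (\<Sum>r\<le>h. p r * log b (gauss_binom CARD('a) CARD('n) (h - r)
                                       / gauss_binom CARD('a) h (h - r)))"
  shows "(\<forall>P. is_dist (in_alph h :: ('a ^ 'n) set set) P \<longrightarrow> MI P \<le> C)
       \<and> (\<exists>P. is_dist (in_alph h :: ('a ^ 'n) set set) P \<and> MI P = C)"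
proof -
  note hT = assms(2) and b1 = assms(3) and pnn = assms(4) and psum = assms(5)
  define q where "q = CARD('a)"
  define T where "T = CARD('n)"
  have q2: "q \<ge> 2" unfolding q_def by (rule card_field_ge2)
  define A where "A = (in_alph h :: ('a ^ 'n) set set)"
  define B where "B = (out_alph h :: ('a ^ 'n) set set)"
  define W where "W = (chanW h p :: ('a ^ 'n) set \<Rightarrow> ('a ^ 'n) set \<Rightarrow> real)"
  define R where "R = (\<lambda>V::('a^'n) set. p (h - sdim V) / gauss_binom q T (sdim V))"
  define L where "L = (\<lambda>r. log b (gauss_binom q T r / gauss_binom q h r))"
  have finA: "finite A" and finB: "finite B" by simp_all
  have Agr: "A = grass h" unfolding A_def in_alph_def ..
  have memB: "\<And>V. V \<in> B \<Longrightarrow> sdim V \<le> h \<and> V \<in> grass (sdim V)"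
    unfolding B_def by (rule out_alph_mem)
  have gbh: "\<And>r. r \<le> h \<Longrightarrow> gauss_binom q h r > 0" using gauss_pos[OF q2] by simp
  have gbT: "\<And>r. r \<le> h \<Longrightarrow> gauss_binom q T r > 0" using gauss_pos[OF q2] hT unfolding T_def by simp
  have Wdef: "\<And>V U. W V U = (if V \<subseteq> U then p (h - sdim V) / gauss_binom q h (sdim V) else 0)"
    unfolding W_def chanW_def q_def ..
  have Wnn: "\<And>V U. V \<in> B \<Longrightarrow> W V U \<ge> 0"
    unfolding Wdef using memB gbh pnn by (auto intro!: divide_nonneg_pos)
  have Rnn: "\<And>V. V \<in> B \<Longrightarrow> R V \<ge> 0"
    unfolding R_def using memB gbT pnn by (auto intro!: divide_nonneg_pos)
  have WR: "\<And>V U. V \<in> B \<Longrightarrow> W V U \<noteq> 0 \<Longrightarrow> R V > 0"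
  proof -
    fix V U assume V: "V \<in> B" and w: "W V U \<noteq> 0"
    hence "p (h - sdim V) \<noteq> 0" unfolding Wdef by (auto split: if_splits)
    moreover have "p (h - sdim V) \<ge> 0" using pnn by simp
    ultimately show "R V > 0" unfolding R_def using gbT memB[OF V] by simp
  qed
  have sumW: "\<And>U. U \<in> A \<Longrightarrow> (\<Sum>V\<in>B. W V U) = 1"
  proof -
    fix U assume U: "U \<in> A"
    have "(\<Sum>V\<in>B. W V U) = (\<Sum>r\<le>h. gauss_binom q h r * (p (h - r) / gauss_binom q h r))"
      unfolding Wdef B_def q_def
      by (rule chan_sum_U[where f = "\<lambda>r. p (h - r) / gauss_binom CARD('a) h r"]) (use U Agr in simp)
    also have "\<dots> = (\<Sum>r\<le>h. p (h - r))" using gbh by (intro sum.cong) (auto, metis less_irrefl)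
    also have "\<dots> = 1" using sum_rev_atMost[of p h] psum by simp
    finally show "(\<Sum>V\<in>B. W V U) = 1" .
  qed
  have sumR: "(\<Sum>V\<in>B. R V) = 1"
  proof -
    have "(\<Sum>V\<in>B. R V) = (\<Sum>r\<le>h. real (card (grass r :: ('a^'n) set set)) * (p (h - r) / gauss_binom q T r))"
      unfolding B_def R_def by (rule out_sum_R)
    also have "\<dots> = (\<Sum>r\<le>h. p (h - r))"
    proof (rule sum.cong[OF refl])
      fix r assume "r \<in> {..h}"
      hence r: "r \<le> h" by simp
      have "real (card (grass r :: ('a^'n) set set)) = gauss_binom q T r"
        using countB[where 'a='a and 'n='n, of r] hT r unfolding q_def T_def by simp
      thus "real (card (grass r :: ('a^'n) set set)) * (p (h - r) / gauss_binom q T r) = p (h - r)"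
        using gbT[OF r] by simp
    qed
    also have "\<dots> = 1" using sum_rev_atMost[of p h] psum by simp
    finally show ?thesis .
  qed
  have Ceq: "C = (\<Sum>r\<le>h. p (h - r) * L r)"
  proof -
    have "C = (\<Sum>r\<le>h. (\<lambda>r. p r * L (h - r)) r)" unfolding C_def L_def q_def T_def by simp
    also have "\<dots> = (\<Sum>r\<le>h. (\<lambda>r. p r * L (h - r)) (h - r))" by (rule sum_rev_atMost[symmetric])
    also have "\<dots> = (\<Sum>r\<le>h. p (h - r) * L r)" by (intro sum.cong) auto
    finally show ?thesis .
  qed
  have decomp: "MI P = C + (\<Sum>V\<in>B. (\<Sum>U\<in>A. P U * W V U) * log b (R V / (\<Sum>U\<in>A. P U * W V U)))"
    if P: "is_dist A P" for P
  proof -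
    define Q where "Q = (\<lambda>V. \<Sum>U\<in>A. P U * W V U)"
    have Pnn: "\<And>U. U \<in> A \<Longrightarrow> P U \<ge> 0" and Psum: "(\<Sum>U\<in>A. P U) = 1"
      using P unfolding is_dist_def by auto
    define X1 where "X1 = (\<lambda>U V. if P U * W V U = 0 then 0 else P U * W V U * log b (W V U / R V))"
    define X2 where "X2 = (\<lambda>U V. if P U * W V U = 0 then 0 else P U * W V U * log b (R V / Q V))"
    have pw: "(if P U * W V U = 0 then 0 else P U * W V U * log b (W V U / Q V)) = X1 U V + X2 U V"
      if U: "U \<in> A" and V: "V \<in> B" for U V
    proof (cases "P U * W V U = 0")
      case True thus ?thesis unfolding X1_def X2_def by simp
    next
      case False
      have pu: "P U > 0" using Pnn[OF U] False by (cases "P U = 0") auto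
      have wu: "W V U > 0" using Wnn[OF V, of U] False by (cases "W V U = 0") auto
      have rv: "R V > 0" using WR[OF V, of U] wu by simp
      have "P U * W V U \<le> Q V" unfolding Q_def
        by (rule member_le_sum[OF U _ finA, of "\<lambda>U. P U * W V U"])
           (auto intro: mult_nonneg_nonneg Pnn Wnn[OF V])
      hence qv: "Q V > 0" using pu wu by (smt (verit) mult_pos_pos)
      show ?thesis unfolding X1_def X2_def using False pu wu rv qv
        by (simp add: log_divide algebra_simps)
    qed
    have "MI P = (\<Sum>U\<in>A. \<Sum>V\<in>B. X1 U V + X2 U V)"
      unfolding MI_def mutual_info_dmc_def A_def[symmetric] B_def[symmetric] W_def[symmetric]
    proof (intro sum.cong refl)
      fix U V assume U: "U \<in> A" and V: "V \<in> B"
      show "(if P U * W V U = 0 then 0 else P U * W V U * log b (W V U / (\<Sum>u'\<in>A. P u' * W V u')))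
          = X1 U V + X2 U V" using pw[OF U V] unfolding Q_def .
    qed
    also have "\<dots> = (\<Sum>U\<in>A. \<Sum>V\<in>B. X1 U V) + (\<Sum>U\<in>A. \<Sum>V\<in>B. X2 U V)"
      by (simp add: sum.distrib)
    also have "(\<Sum>U\<in>A. \<Sum>V\<in>B. X1 U V) = (\<Sum>U\<in>A. P U * C)"
    proof (rule sum.cong[OF refl])
      fix U assume U: "U \<in> A"
      define F where "F = (\<lambda>r. if P U * (p (h - r) / gauss_binom q h r) = 0 then 0
          else P U * (p (h - r) / gauss_binom q h r) * L r)"
      have "(\<Sum>V\<in>B. X1 U V) = (\<Sum>V\<in>B. if V \<subseteq> U then F (sdim V) else 0)"
      proof (rule sum.cong[OF refl])
        fix V assume V: "V \<in> B"
        have s: "sdim V \<le> h" using memB[OF V] by simp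
        show "X1 U V = (if V \<subseteq> U then F (sdim V) else 0)"
        proof (cases "V \<subseteq> U \<and> P U * (p (h - sdim V) / gauss_binom q h (sdim V)) \<noteq> 0")
          case True
          hence pv: "p (h - sdim V) \<noteq> 0" by auto
          have "W V U / R V = gauss_binom q T (sdim V) / gauss_binom q h (sdim V)"
            unfolding Wdef R_def using True pv gbh[OF s] gbT[OF s] by (simp add: field_simps)
          thus ?thesis unfolding X1_def F_def L_def using True by (simp add: Wdef)
        next
          case False thus ?thesis unfolding X1_def F_def by (auto simp: Wdef)
        qed
      qed
      also have "\<dots> = (\<Sum>r\<le>h. gauss_binom q h r * F r)"
        unfolding B_def q_def using chan_sum_U[of U h F] U Agr by simp
      also have "\<dots> = (\<Sum>r\<le>h. P U * (p (h - r) * L r))"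
      proof (rule sum.cong[OF refl])
        fix r assume "r \<in> {..h}"
        hence g: "gauss_binom q h r > 0" using gbh by simp
        show "gauss_binom q h r * F r = P U * (p (h - r) * L r)"
          unfolding F_def using g by (auto simp: field_simps)
      qed
      also have "\<dots> = P U * C" unfolding Ceq by (simp add: sum_distrib_left)
      finally show "(\<Sum>V\<in>B. X1 U V) = P U * C" .
    qed
    also have "\<dots> = C" using Psum by (simp add: sum_distrib_right[symmetric])
    also have "(\<Sum>U\<in>A. \<Sum>V\<in>B. X2 U V) = (\<Sum>V\<in>B. \<Sum>U\<in>A. X2 U V)" by (rule sum.swap)
    also have "\<dots> = (\<Sum>V\<in>B. Q V * log b (R V / Q V))"
    proof (rule sum.cong[OF refl])
      fix V
      have "(\<Sum>U\<in>A. X2 U V) = (\<Sum>U\<in>A. P U * W V U * log b (R V / Q V))"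
        unfolding X2_def by (intro sum.cong) auto
      thus "(\<Sum>U\<in>A. X2 U V) = Q V * log b (R V / Q V)"
        unfolding Q_def by (simp add: sum_distrib_right)
    qed
    finally show ?thesis unfolding Q_def .
  qed
  have upper: "MI P \<le> C" if P: "is_dist A P" for P
  proof -
    define Q where "Q = (\<lambda>V. \<Sum>U\<in>A. P U * W V U)"
    have Pnn: "\<And>U. U \<in> A \<Longrightarrow> P U \<ge> 0" and Psum: "(\<Sum>U\<in>A. P U) = 1"
      using P unfolding is_dist_def by auto
    have lnb: "ln b > 0" using b1 by simp
    have sumQ: "(\<Sum>V\<in>B. Q V) = 1"
    proof -
      have "(\<Sum>V\<in>B. Q V) = (\<Sum>U\<in>A. \<Sum>V\<in>B. P U * W V U)" unfolding Q_def by (rule sum.swap)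
      also have "\<dots> = (\<Sum>U\<in>A. P U)" using sumW by (simp add: sum_distrib_left[symmetric])
      finally show ?thesis using Psum by simp
    qed
    have pt: "Q V * log b (R V / Q V) \<le> (R V - Q V) / ln b" if V: "V \<in> B" for V
    proof -
      have qnn: "Q V \<ge> 0" unfolding Q_def using Pnn Wnn[OF V] by (auto intro: sum_nonneg)
      show ?thesis
      proof (cases "Q V = 0")
        case True thus ?thesis using Rnn[OF V] lnb by simp
      next
        case False
        hence qv: "Q V > 0" using qnn by simp
        obtain U where "U \<in> A" "P U * W V U \<noteq> 0"
          using False unfolding Q_def by (meson sum.neutral)
        hence "W V U \<noteq> 0" by auto
        hence rv: "R V > 0" using WR[OF V] by blast
        have "ln (R V / Q V) \<le> R V / Q V - 1" using rv qv by (intro ln_le_minus_one) simp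
        hence "Q V * ln (R V / Q V) \<le> Q V * (R V / Q V - 1)" using qv by (simp add: mult_left_mono)
        also have "\<dots> = R V - Q V" using qv by (simp add: field_simps)
        finally have "Q V * ln (R V / Q V) / ln b \<le> (R V - Q V) / ln b"
          using lnb by (simp add: divide_right_mono)
        thus ?thesis unfolding log_def by simp
      qed
    qed
    have "(\<Sum>V\<in>B. Q V * log b (R V / Q V)) \<le> (\<Sum>V\<in>B. (R V - Q V) / ln b)"
      using pt by (rule sum_mono)
    also have "\<dots> = ((\<Sum>V\<in>B. R V) - (\<Sum>V\<in>B. Q V)) / ln b"
      by (simp add: sum_divide_distrib[symmetric] sum_subtractf)
    also have "\<dots> = 0" using sumR sumQ by simp
    finally show ?thesis using decomp[OF P] unfolding Q_def by simp
  qed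
  define G where "G = real (card A)"
  have G: "G = gauss_binom q T h" unfolding G_def Agr q_def T_def using countB[where 'a='a and 'n='n, OF hT] by simp
  have Gpos: "G > 0" unfolding G using gauss_pos[OF q2] hT unfolding T_def by simp
  define P0 where "P0 = (\<lambda>U::('a^'n) set. 1 / G)"
  have P0d: "is_dist A P0" unfolding is_dist_def P0_def using Gpos unfolding G_def by (simp add: card_gt_0_iff)
  have QR: "(\<Sum>U\<in>A. P0 U * W V U) = R V" if V: "V \<in> B" for V
  proof -
    define r where "r = sdim V"
    have r: "r \<le> h" "V \<in> grass r" using memB[OF V] unfolding r_def by auto
    define N where "N = real (card {U \<in> grass h. V \<subseteq> U})"
    have N: "N * gg q h r (h - r) = gg q T r (h - r)"
      unfolding N_def q_def T_def using countC[OF r(2) r(1) hT] .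
    have gp: "gg q h r (h - r) > 0" "gg q T r (h - r) > 0" using gg_pos[OF q2] r hT unfolding T_def by auto
    have id: "G * gauss_binom q h r = (gg q T r (h - r) / gg q h r (h - r)) * gauss_binom q T r"
      unfolding G using gauss_ident[OF q2 r(1) hT[folded T_def]] .
    have NN: "N = gg q T r (h - r) / gg q h r (h - r)" using N gp by (simp add: field_simps)
    have "(\<Sum>U\<in>A. P0 U * W V U) = (\<Sum>U\<in>A. if V \<subseteq> U then 1 / G * (p (h - r) / gauss_binom q h r) else 0)"
      unfolding P0_def Wdef r_def by (intro sum.cong) auto
    also have "\<dots> = (\<Sum>U\<in>{U \<in> A. V \<subseteq> U}. 1 / G * (p (h - r) / gauss_binom q h r))"
      by (rule sum.inter_filter[symmetric]) simp
    also have "\<dots> = N * (1 / G * (p (h - r) / gauss_binom q h r))" unfolding N_def Agr by simp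
    also have "\<dots> = N * p (h - r) / (G * gauss_binom q h r)" by simp
    also have "\<dots> = N * p (h - r) / (N * gauss_binom q T r)" using id unfolding NN by simp
    also have "\<dots> = p (h - r) / gauss_binom q T r"
    proof -
      have "N > 0" unfolding NN using gp by simp
      thus ?thesis by simp
    qed
    finally show ?thesis unfolding R_def r_def .
  qed
  have "MI P0 = C"
  proof -
    have "(\<Sum>V\<in>B. (\<Sum>U\<in>A. P0 U * W V U) * log b (R V / (\<Sum>U\<in>A. P0 U * W V U))) = 0"
    proof (rule sum.neutral, rule ballI)
      fix V assume V: "V \<in> B"
      show "(\<Sum>U\<in>A. P0 U * W V U) * log b (R V / (\<Sum>U\<in>A. P0 U * W V U)) = 0"
        unfolding QR[OF V] by (cases "R V = 0") auto
    qed
    thus ?thesis using decomp[OF P0d] by simp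
  qed
  thus ?thesis using upper P0d unfolding A_def by blast
qed

end
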